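(* Let $n\ge 1$, $\sigma>0$, $b>0$, $\mathbf{a}\in\mathbb{R}^n$, let $\mathbf{D}\in\mathbb{R}^{n\times n}$ be a diagonal matrix with positive diagonal entries, and let $\mathbf{e}\in\mathbb{R}^n$ be the all-ones vector. Consider the problem $$\min_{\mathbf{x}\in\mathbb{R}^n}\ f(\mathbf{x})=\mathbf{x}^T\mathbf{a}+\tfrac{\sigma}{2}\mathbf{x}^T\mathbf{D}\mathbf{x}+\tfrac{\sigma}{2}(\mathbf{e}^T\mathbf{x})^2\quad\text{subject to } 0\le \mathbf{x}\le b\,\mathbf{e}.$$ Define $F:\mathbb{R}\to\mathbb{R}$ by $F(\tau)=\tau-\mathbf{e}^T P\big[-\tfrac{1}{\sigma}\mathbf{D}^{-1}(\mathbf{a}+\sigma\tau\mathbf{e});0,b\big]$. Let $\tau^*$ be a root of $F$, and set $\mathbf{x}^*=P\big[-\tfrac{1}{\sigma}\mathbf{D}^{-1}(\mathbf{a}+\sigma\tau^*\mathbf{e});0,b\big]$. Then $\mathbf{x}^*$ satisfies the first-order KKT condition $$\mathbf{x}^*-P\big[\mathbf{x}^*-\nabla f(\mathbf{x}^* );0,b\big]=0 .$$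
   Context: For $\mathbf{z}\in\mathbb{R}^n$, $P[\mathbf{z};0,b]$ denotes the componentwise projection of $\mathbf{z}$ onto the box $[0,b]^n$, i.e. $(P[\mathbf{z};0,b])_i=\min(\max(z_i,0),b)$. *)

theory Defs
  imports "HOL-Analysis.Analysis"
begin

definition box_proj :: "real ^ 'n \<Rightarrow> real \<Rightarrow> real ^ 'n" where
  "box_proj z b = (\<chi> i. min (max (z $ i) 0) b)"

abbreviation ones :: "real ^ 'n" where
  "ones \<equiv> vec 1"

definition obj :: "real ^ 'n \<Rightarrow> real \<Rightarrow> real ^ 'n ^ 'n \<Rightarrow> real ^ 'n \<Rightarrow> real" where
  "obj a \<sigma> D x = x \<bullet> a + \<sigma> / 2 * (x \<bullet> (D *v x)) + \<sigma> / 2 * (ones \<bullet> x)\<^sup>2"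

definition Fbox :: "real ^ 'n \<Rightarrow> real \<Rightarrow> real ^ 'n ^ 'n \<Rightarrow> real \<Rightarrow> real \<Rightarrow> real" where
  "Fbox a \<sigma> D b \<tau> = \<tau> - ones \<bullet> box_proj (- (1 / \<sigma>) *\<^sub>R (matrix_inv D *v (a + (\<sigma> * \<tau>) *\<^sub>R ones))) b"

end

theory Submission
  imports Defs
begin

lemma diag_inv:
  fixes D :: "real ^ 'n ^ 'n"
  assumes off: "\<And>i j. i \<noteq> j \<Longrightarrow> D $ i $ j = 0"
    and pos: "\<And>i. D $ i $ i > 0"
  shows "matrix_inv D *v v = (\<chi> i. v $ i / D $ i $ i)"
proof -
  define Di :: "real ^ 'n ^ 'n" where "Di = (\<chi> i j. if i = j then 1 / D $ i $ i else 0)"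
  have Deq: "D $ i $ j = (if i = j then D $ i $ i else 0)" for i j using off by auto
  have nz: "D $ i $ i \<noteq> 0" for i using pos[of i] by simp
  have S: "(\<Sum>k\<in>UNIV. f k * (if k = j then c else 0)) = f j * c"
    "(\<Sum>k\<in>UNIV. (if i = k then c else 0) * f k) = c * f i" for f :: "'n \<Rightarrow> real" and c i j
    by (simp_all add: if_distrib[of "\<lambda>x. f _ * x"] if_distrib[of "\<lambda>x. x * f _"] cong: if_cong)
  have 1: "D ** Di = mat 1"
    unfolding matrix_matrix_mult_def mat_def Di_def
    by (subst Deq) (simp add: vec_eq_iff S nz)
  have 2: "Di ** D = mat 1"
    unfolding matrix_matrix_mult_def mat_def Di_def
    by (subst Deq) (simp add: vec_eq_iff S nz)
  define M where "M = matrix_inv D"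
  have "D ** M = mat 1 \<and> M ** D = mat 1"
    unfolding M_def matrix_inv_def by (rule someI[of _ Di]) (use 1 2 in auto)
  hence "Di = Di ** (D ** M)" by (simp add: matrix_mul_rid)
  also have "\<dots> = (Di ** D) ** M" by (simp add: matrix_mul_assoc)
  also have "\<dots> = M" using 2 by (simp add: matrix_mul_lid)
  finally have "M = Di" by simp
  hence "matrix_inv D *v v = Di *v v" unfolding M_def by simp
  also have "\<dots> = (\<chi> i. v $ i / D $ i $ i)" unfolding Di_def matrix_vector_mult_def
    by (simp add: vec_eq_iff S)
  finally show ?thesis .
qed

theorem lemma4p1:
  fixes a :: "real ^ 'n" and D :: "real ^ 'n ^ 'n" and \<sigma> b \<tau>s :: real
  assumes "\<sigma> > 0" and "b > 0"
    and "\<And>i j. i \<noteq> j \<Longrightarrow> D $ i $ j = 0"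
    and "\<And>i. D $ i $ i > 0"
    and "Fbox a \<sigma> D b \<tau>s = 0"
  shows "let xs = box_proj (- (1 / \<sigma>) *\<^sub>R (matrix_inv D *v (a + (\<sigma> * \<tau>s) *\<^sub>R ones))) b
         in \<exists>g. (GDERIV (obj a \<sigma> D) xs :> g) \<and> xs - box_proj (xs - g) b = 0"
proof -
  have Deq: "D $ i $ j = (if i = j then D $ i $ i else 0)" for i j using assms(3) by auto
  have Dv: "D *v h = (\<chi> i. D $ i $ i * h $ i)" for h
    unfolding matrix_vector_mult_def
    by (subst Deq) (simp add: vec_eq_iff if_distrib[of "\<lambda>x. x * h $ _"] cong: if_cong)
  define y where "y = - (1 / \<sigma>) *\<^sub>R (matrix_inv D *v (a + (\<sigma> * \<tau>s) *\<^sub>R ones))"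
  define xs where "xs = box_proj y b"
  have yi: "y $ i = - (a $ i + \<sigma> * \<tau>s) / (\<sigma> * D $ i $ i)" for i
    using assms(1) assms(4)[of i] by (simp add: y_def diag_inv[OF assms(3,4)] field_simps)
  have tau: "\<tau>s = ones \<bullet> xs" using assms(5) unfolding Fbox_def xs_def y_def by simp
  define g where "g = a + \<sigma> *\<^sub>R (D *v xs) + (\<sigma> * (ones \<bullet> xs)) *\<^sub>R ones"
  have sym: "x \<bullet> (D *v h) = h \<bullet> (D *v x)" for x h
    unfolding Dv inner_vec_def by (simp add: algebra_simps)
  have der: "(obj a \<sigma> D has_derivative (\<lambda>h. h \<bullet> a + \<sigma> / 2 * (h \<bullet> (D *v xs) + xs \<bullet> (D *v h))
        + \<sigma> / 2 * (2 * (ones \<bullet> xs) * (ones \<bullet> h)))) (at xs)"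
  proof -
    have l: "((*v) D has_derivative (*v) D) (at xs)"
      by (rule bounded_linear_imp_has_derivative) simp
    show ?thesis
      unfolding obj_def[abs_def]
      apply (rule has_derivative_eq_rhs)
       apply (rule derivative_eq_intros l refl | simp)+
      apply (simp add: algebra_simps)
      done
  qed
  have "GDERIV (obj a \<sigma> D) xs :> g"
    unfolding gderiv_def
    apply (rule has_derivative_eq_rhs[OF der])
    apply (rule ext)
    apply (simp add: g_def sym inner_add_right inner_commute algebra_simps)
    done
  moreover have "xs - box_proj (xs - g) b = 0"
  proof (simp add: vec_eq_iff box_proj_def, intro allI)
    fix i
    have dpos: "D $ i $ i > 0" using assms(4) .
    have gi: "g $ i = \<sigma> * D $ i $ i * (xs $ i - y $ i)"
      using dpos assms(1) unfolding g_def Dv yi tau[symmetric] by (simp add: field_simps)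
    have xi: "xs $ i = min (max (y $ i) 0) b" unfolding xs_def box_proj_def by simp
    have p: "\<sigma> * D $ i $ i > 0" using dpos assms(1) by simp
    show "xs $ i = min (max (xs $ i - g $ i) 0) b"
    proof (cases "y $ i < 0")
      case True
      then have "xs $ i = 0" using xi assms(2) by simp
      moreover have "g $ i > 0" using gi True p \<open>xs $ i = 0\<close> by (simp add: mult_pos_neg)
      ultimately show ?thesis using assms(2) by simp
    next
      case F: False
      show ?thesis
      proof (cases "y $ i > b")
        case True
        then have "xs $ i = b" using xi assms(2) by simp
        moreover have "g $ i < 0" using gi True p \<open>xs $ i = b\<close> by (simp add: mult_pos_neg)
        ultimately show ?thesis using assms(2) by simp
      next
        case False
        then have "xs $ i = y $ i" using xi F by simp
        then show ?thesis using gi xi by simp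
      qed
    qed
  qed
  ultimately show ?thesis unfolding Let_def xs_def y_def by blast
qed

end
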